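(* Let $n\ge 1$ and $p\in(0,1)^n$. Let $Y\in\{0,1\}$ be a random bit with $\mathbb{P}(Y=1)=\mathbb{P}(Y=0)=1/2$, and conditionally on $Y$ let $X_1,\ldots,X_n\in\{0,1\}$ be independent with $\mathbb{P}(X_i=1\mid Y=1)=\mathbb{P}(X_i=0\mid Y=0)=p_i$. Let $f^{\mathrm{OPT}}:\{0,1\}^n\to\{0,1\}$ be a decision rule minimizing $\mathbb{P}(f(X)\neq Y)$ over all $f:\{0,1\}^n\to\{0,1\}$, where $X=(X_1,\ldots,X_n)$. Let $w_i=\log\frac{p_i}{1-p_i}$. Then $$\mathbb{P}(f^{\mathrm{OPT}}(X)\neq Y)\ge\frac12\cdot 2^n\sqrt{\prod_{i=1}^n p_i(1-p_i)}\cdot\exp\Big(-\frac12\sqrt{\sum_{i=1}^n w_i^2}\Big).$$ *)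

theory Defs
  imports Complex_Main
begin

text \<open>A point x of {0,1}^n is encoded by the set S = {i < n. x_i = 1} (a subset of {..<n});
  a bit is encoded as bool (True = 1).\<close>

definition joint_pmf :: "nat \<Rightarrow> (nat \<Rightarrow> real) \<Rightarrow> nat set \<Rightarrow> bool \<Rightarrow> real" where
  "joint_pmf n p S y = (1/2) * (\<Prod>i<n. if (i \<in> S) = y then p i else 1 - p i)"

definition err_prob :: "nat \<Rightarrow> (nat \<Rightarrow> real) \<Rightarrow> (nat set \<Rightarrow> bool) \<Rightarrow> real" where
  "err_prob n p f = (\<Sum>S\<in>Pow {..<n}. \<Sum>y\<in>(UNIV::bool set). if f S \<noteq> y then joint_pmf n p S y else 0)"

end

theory Submission
  imports Defs
begin

definition LL :: "nat \<Rightarrow> (nat \<Rightarrow> real) \<Rightarrow> nat set \<Rightarrow> real" where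
  "LL n w S = (\<Sum>i<n. if i \<in> S then w i else - w i)"

lemma LL_sq_sum: "(\<Sum>S\<in>Pow {..<n}. (LL n w S)\<^sup>2) = 2 ^ n * (\<Sum>i<n. (w i)\<^sup>2)"
proof (induction n)
  case 0
  then show ?case by (simp add: LL_def)
next
  case (Suc n)
  have disj: "Pow {..<n} \<inter> insert n ` Pow {..<n} = {}" by auto
  have inj: "inj_on (insert n) (Pow {..<n})"
    by (rule inj_onI) (metis Pow_iff insert_ident lessThan_iff order_less_irrefl subset_eq)
  have L1: "LL (Suc n) w S = LL n w S - w n" if "S \<in> Pow {..<n}" for S
    using that by (auto simp: LL_def)
  have L2: "LL (Suc n) w (insert n S) = LL n w S + w n" if "S \<in> Pow {..<n}" for S
  proof -
    have "(\<Sum>i<n. if i \<in> insert n S then w i else - w i) = LL n w S"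
      unfolding LL_def by (rule sum.cong) auto
    then show ?thesis by (simp add: LL_def)
  qed
  have "(\<Sum>S\<in>Pow {..<Suc n}. (LL (Suc n) w S)\<^sup>2)
      = (\<Sum>S\<in>Pow {..<n}. (LL (Suc n) w S)\<^sup>2) + (\<Sum>S\<in>insert n ` Pow {..<n}. (LL (Suc n) w S)\<^sup>2)"
    unfolding lessThan_Suc Pow_insert by (rule sum.union_disjoint) (use disj in auto)
  also have "(\<Sum>S\<in>insert n ` Pow {..<n}. (LL (Suc n) w S)\<^sup>2) = (\<Sum>S\<in>Pow {..<n}. (LL n w S + w n)\<^sup>2)"
    by (simp add: sum.reindex[OF inj] L2)
  also have "(\<Sum>S\<in>Pow {..<n}. (LL (Suc n) w S)\<^sup>2) = (\<Sum>S\<in>Pow {..<n}. (LL n w S - w n)\<^sup>2)"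
    by (rule sum.cong) (simp_all add: L1)
  also have "(\<Sum>S\<in>Pow {..<n}. (LL n w S - w n)\<^sup>2) + (\<Sum>S\<in>Pow {..<n}. (LL n w S + w n)\<^sup>2)
      = (\<Sum>S\<in>Pow {..<n}. 2 * (LL n w S)\<^sup>2 + 2 * (w n)\<^sup>2)"
    by (simp add: sum.distrib[symmetric] power2_eq_square algebra_simps)
  also have "\<dots> = 2 * 2 ^ n * (\<Sum>i<n. (w i)\<^sup>2) + 2 ^ n * 2 * (w n)\<^sup>2"
    by (simp add: sum.distrib sum_distrib_left[symmetric] Suc card_Pow)
  finally show ?case by (simp add: algebra_simps)
qed

lemma jensen_exp:
  fixes x :: "'a \<Rightarrow> real"
  assumes "finite P" "P \<noteq> {}"
  shows "real (card P) * exp ((\<Sum>S\<in>P. x S) / real (card P)) \<le> (\<Sum>S\<in>P. exp (x S))"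
proof -
  define c where "c = (\<Sum>S\<in>P. x S) / real (card P)"
  have cp: "real (card P) > 0" using assms by (simp add: card_gt_0_iff)
  have "exp c * (1 + (x S - c)) \<le> exp (x S)" for S
  proof -
    have "exp c * (1 + (x S - c)) \<le> exp c * exp (x S - c)"
      by (rule mult_left_mono) auto
    then show ?thesis by (simp add: exp_diff)
  qed
  then have "(\<Sum>S\<in>P. exp c * (1 + (x S - c))) \<le> (\<Sum>S\<in>P. exp (x S))"
    by (rule sum_mono)
  moreover have "(\<Sum>S\<in>P. exp c * (1 + (x S - c))) = exp c * (real (card P) + (\<Sum>S\<in>P. x S) - real (card P) * c)"
    by (simp add: sum_distrib_left[symmetric] sum.distrib sum_subtractf)
  moreover have "real (card P) * c = (\<Sum>S\<in>P. x S)" using cp by (simp add: c_def)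
  ultimately show ?thesis by (simp add: c_def algebra_simps)
qed

lemma mean_abs_le:
  fixes x :: "'a \<Rightarrow> real"
  assumes "finite P" "P \<noteq> {}" "(\<Sum>S\<in>P. (x S)\<^sup>2) = real (card P) * s\<^sup>2" "s \<ge> 0"
  shows "(\<Sum>S\<in>P. \<bar>x S\<bar>) / real (card P) \<le> s"
proof -
  define N where "N = real (card P)"
  define m where "m = (\<Sum>S\<in>P. \<bar>x S\<bar>) / N"
  have Np: "N > 0" using assms by (simp add: N_def card_gt_0_iff)
  have sm: "(\<Sum>S\<in>P. \<bar>x S\<bar>) = N * m" using Np by (simp add: m_def)
  have "0 \<le> (\<Sum>S\<in>P. (\<bar>x S\<bar> - m)\<^sup>2)" by (rule sum_nonneg) auto
  also have "\<dots> = (\<Sum>S\<in>P. (x S)\<^sup>2 - 2 * m * \<bar>x S\<bar> + m\<^sup>2)"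
    by (rule sum.cong) (simp_all add: power2_eq_square algebra_simps)
  also have "\<dots> = (\<Sum>S\<in>P. (x S)\<^sup>2) - 2 * m * (\<Sum>S\<in>P. \<bar>x S\<bar>) + N * m\<^sup>2"
    by (simp add: sum.distrib sum_subtractf sum_distrib_left N_def)
  also have "\<dots> = N * (s\<^sup>2 - m\<^sup>2)" using assms(3) sm by (simp add: N_def power2_eq_square algebra_simps)
  finally have "m\<^sup>2 \<le> s\<^sup>2" using Np by (simp add: zero_le_mult_iff)
  moreover have "m \<ge> 0" using Np by (simp add: m_def sum_nonneg)
  ultimately have "m \<le> s" using assms(4) by (meson power2_le_imp_le)
  then show ?thesis by (simp add: m_def N_def)
qed

lemma min_formula:
  fixes a b :: real
  assumes "a > 0" "b > 0"
  shows "min a b = sqrt (a * b) * exp (- \<bar>ln a - ln b\<bar> / 2)"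
proof -
  have key: "sqrt (u * v) * exp (- (ln v - ln u) / 2) = u" if "u > 0" "v > 0" for u v :: real
  proof -
    have e2: "exp (ln u - ln v) = (exp ((ln u - ln v) / 2))\<^sup>2"
      by (simp add: power2_eq_square exp_add[symmetric])
    have "exp (- (ln v - ln u) / 2) = sqrt (exp (ln u - ln v))"
      unfolding e2 real_sqrt_abs by (simp add: algebra_simps)
    also have "\<dots> = sqrt (u / v)" using that by (simp add: exp_diff)
    finally have "sqrt (u * v) * exp (- (ln v - ln u) / 2) = sqrt (u * v * (u / v))"
      by (metis real_sqrt_mult)
    also have "u * v * (u / v) = u\<^sup>2" using that by (simp add: power2_eq_square)
    finally show ?thesis using that by simp
  qed
  show ?thesis
  proof (cases "a \<le> b")
    case True
    then have "ln a \<le> ln b" using assms by simp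
    then show ?thesis using key[of a b] assms True by simp
  next
    case False
    then have "ln b \<le> ln a" using assms by simp
    then show ?thesis using key[of b a] assms False by (simp add: mult.commute)
  qed
qed

lemma joint_min:
  assumes p: "\<forall>i<n. 0 < p i \<and> p i < 1" and S: "S \<subseteq> {..<n}"
  shows "min (joint_pmf n p S True) (joint_pmf n p S False)
    = (1/2) * sqrt (\<Prod>i<n. p i * (1 - p i)) * exp (- \<bar>LL n (\<lambda>i. ln (p i / (1 - p i))) S\<bar> / 2)"
proof -
  define A where "A = (\<Prod>i<n. if i \<in> S then p i else 1 - p i)"
  define B where "B = (\<Prod>i<n. if i \<in> S then 1 - p i else p i)"
  have jA: "joint_pmf n p S True = A / 2" by (simp add: joint_pmf_def A_def)
  have jB: "joint_pmf n p S False = B / 2"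
    unfolding joint_pmf_def B_def by (simp, rule prod.cong) auto
  have Ap: "A > 0" unfolding A_def using p by (intro prod_pos) auto
  have Bp: "B > 0" unfolding B_def using p by (intro prod_pos) auto
  have AB: "A * B = (\<Prod>i<n. p i * (1 - p i))"
    unfolding A_def B_def prod.distrib[symmetric] by (rule prod.cong) auto
  have lnA: "ln A = (\<Sum>i<n. ln (if i \<in> S then p i else 1 - p i))"
    unfolding A_def using p by (intro ln_prod) auto
  have lnB: "ln B = (\<Sum>i<n. ln (if i \<in> S then 1 - p i else p i))"
    unfolding B_def using p by (intro ln_prod) auto
  have "ln A - ln B = LL n (\<lambda>i. ln (p i / (1 - p i))) S"
    unfolding lnA lnB LL_def sum_subtractf[symmetric]
    by (rule sum.cong) (use p in \<open>auto simp: ln_div\<close>)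
  moreover have "ln (A / 2) - ln (B / 2) = ln A - ln B" using Ap Bp by (simp add: ln_div)
  moreover have "sqrt (A / 2 * (B / 2)) = (1/2) * sqrt (A * B)"
    by (simp add: real_sqrt_divide real_sqrt_mult)
  ultimately show ?thesis
    unfolding jA jB using min_formula[of "A/2" "B/2"] Ap Bp AB by simp
qed

lemma err_ge_min:
  "err_prob n p f \<ge> (\<Sum>S\<in>Pow {..<n}. min (joint_pmf n p S True) (joint_pmf n p S False))"
  unfolding err_prob_def UNIV_bool by (rule sum_mono) auto

theorem theorem4:
  fixes n :: nat and p :: "nat \<Rightarrow> real" and f_opt :: "nat set \<Rightarrow> bool"
  assumes "n \<ge> 1"
    and "\<forall>i<n. 0 < p i \<and> p i < 1"
    and "\<forall>f :: nat set \<Rightarrow> bool. err_prob n p f_opt \<le> err_prob n p f"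
  shows "err_prob n p f_opt \<ge>
           (1/2) * 2 ^ n * sqrt (\<Prod>i<n. p i * (1 - p i))
             * exp (- (1/2) * sqrt (\<Sum>i<n. (ln (p i / (1 - p i)))\<^sup>2))"
proof -
  define w where "w = (\<lambda>i. ln (p i / (1 - p i)))"
  define s where "s = sqrt (\<Sum>i<n. (w i)\<^sup>2)"
  define P where "P = Pow {..<n::nat}"
  define C where "C = (1/2) * sqrt (\<Prod>i<n. p i * (1 - p i))"
  have C0: "C \<ge> 0" unfolding C_def using assms(2)
    by (intro mult_nonneg_nonneg real_sqrt_ge_zero prod_nonneg) (auto simp: less_imp_le)
  have cardP: "real (card P) = 2 ^ n" by (simp add: P_def card_Pow)
  have fin: "finite P" "P \<noteq> {}" by (auto simp: P_def)
  have s0: "s \<ge> 0" by (simp add: s_def sum_nonneg)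
  have ss: "s\<^sup>2 = (\<Sum>i<n. (w i)\<^sup>2)" by (simp add: s_def sum_nonneg)
  have sq: "(\<Sum>S\<in>P. (LL n w S)\<^sup>2) = real (card P) * s\<^sup>2"
    using LL_sq_sum[of n w] by (simp add: P_def card_Pow ss)
  have mean: "(\<Sum>S\<in>P. \<bar>LL n w S\<bar>) / real (card P) \<le> s"
    by (rule mean_abs_le[OF fin sq s0])
  have "err_prob n p f_opt \<ge> (\<Sum>S\<in>P. C * exp (- \<bar>LL n w S\<bar> / 2))"
    using err_ge_min[of n p f_opt] joint_min[OF assms(2)] unfolding P_def C_def w_def
    by simp
  also have "(\<Sum>S\<in>P. C * exp (- \<bar>LL n w S\<bar> / 2)) = C * (\<Sum>S\<in>P. exp (- \<bar>LL n w S\<bar> / 2))"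
    by (simp add: sum_distrib_left)
  finally have e1: "err_prob n p f_opt \<ge> C * (\<Sum>S\<in>P. exp (- \<bar>LL n w S\<bar> / 2))" .
  have "real (card P) * exp ((\<Sum>S\<in>P. - \<bar>LL n w S\<bar> / 2) / real (card P))
        \<le> (\<Sum>S\<in>P. exp (- \<bar>LL n w S\<bar> / 2))"
    by (rule jensen_exp[OF fin])
  moreover have "(\<Sum>S\<in>P. - \<bar>LL n w S\<bar> / 2) / real (card P) = - ((\<Sum>S\<in>P. \<bar>LL n w S\<bar>) / real (card P)) / 2"
    by (simp add: sum_negf sum_divide_distrib[symmetric])
  moreover have "exp (- (1/2) * s) \<le> exp (- ((\<Sum>S\<in>P. \<bar>LL n w S\<bar>) / real (card P)) / 2)"
    using mean by simp
  ultimately have "2 ^ n * exp (- (1/2) * s) \<le> (\<Sum>S\<in>P. exp (- \<bar>LL n w S\<bar> / 2))"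
    unfolding cardP by (smt (verit) mult_left_mono zero_le_power)
  then have "C * (2 ^ n * exp (- (1/2) * s)) \<le> err_prob n p f_opt"
    using e1 C0 by (meson mult_left_mono order_trans)
  then show ?thesis by (simp add: C_def s_def w_def algebra_simps)
qed

end
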